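(* Let $\gamma$ be an orbit of the regularized planar two-center problem lying on a regular torus $\mathbb{T}$ with rotation number $W$, and suppose that $\gamma$ (followed for all times $\tau\in\mathbb{R}$) passes through a collision point at exactly one time. Then $W$ is irrational.
   Context: Fix $d>0$ and masses $m_1,m_2>0$ at $(-d,0)$ and $(d,0)$. A test particle moves with Hamiltonian $H=\tfrac12(p_x^2+p_y^2)-m_1/\sqrt{(x+d)^2+y^2}-m_2/\sqrt{(x-d)^2+y^2}$; energies $h<0$. Regularization: $(\lambda,\nu)\in\mathbb{R}\times(\mathbb{R}/2\pi\mathbb{Z})$ with $x+iy=d\sin(\nu+i\lambda)$ (a double cover branched over the centers), conjugate momenta $p_\lambda,p_\nu$, time change $dt=d^2(\cosh^2\lambda-\sin^2\nu)\,d\tau$. On $H=h$ the motion becomes the flow (time $\tau$, defined also through collisions) of $H_\lambda+H_\nu$ on its zero level, $H_\lambda=\tfrac12p_\lambda^2-d(m_1+m_2)\cosh\lambda-hd^2\cosh^2\lambda$, $H_\nu=\tfrac12p_\nu^2+d(m_1-m_2)\sin\nu+hd^2\sin^2\nu$; orbits lie in sets $\{H_\lambda=-g,\ H_\nu=g\}$ for a separation constant $g$. Regular torus: a compact connected component $\mathbb{T}=C_\lambda\times C_\nu$ of such a set with $-g$ a regular value of $H_\lambda$ and $g$ a regular value of $H_\nu$ ($C_\lambda$ a closed curve in the $(\lambda,p_\lambda)$-plane, $C_\nu$ a closed curve in the cylinder $(\mathbb{R}/2\pi\mathbb{Z})\times\mathbb{R}$). Rotation number $W=T_\nu/T_\lambda$,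 where $T_\lambda,T_\nu$ are the $\tau$-periods of the motions on $C_\lambda,C_\nu$; in angle coordinates $\theta_1$ along $C_\nu$, $\theta_2$ along $C_\lambda$ (each in $\mathbb{R}/\mathbb{Z}$, increasing uniformly in $\tau$ with period 1) orbits on $\mathbb{T}$ lift to lines $\theta_2=W\theta_1+\mathrm{const}$. Collision points are the points of $\mathbb{T}$ with $\lambda=0$ and $\nu\equiv\pm\pi/2\pmod{2\pi}$ (they project to the two centers). *)

theory Defs
  imports "HOL-Analysis.Analysis"
begin

text \<open>Regularized planar two-center problem. Points of the (lambda,p_lambda)-plane
and lifts (nu,p_nu) of points of the cylinder are pairs of reals (first component the
position, second the momentum).\<close>

definition Hlam :: "real \<Rightarrow> real \<Rightarrow> real \<Rightarrow> real \<Rightarrow> real \<times> real \<Rightarrow> real" where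
  "Hlam d m1 m2 h z = (snd z)\<^sup>2 / 2 - d * (m1 + m2) * cosh (fst z) - h * d\<^sup>2 * (cosh (fst z))\<^sup>2"

definition Hnu :: "real \<Rightarrow> real \<Rightarrow> real \<Rightarrow> real \<Rightarrow> real \<times> real \<Rightarrow> real" where
  "Hnu d m1 m2 h z = (snd z)\<^sup>2 / 2 + d * (m1 - m2) * sin (fst z) + h * d\<^sup>2 * (sin (fst z))\<^sup>2"

text \<open>The cylinder (R/2piZ) x R, realised as the subset S^1 x R of R^3 via its standard embedding.\<close>

definition cyl :: "real \<times> real \<Rightarrow> real \<times> real \<times> real" where
  "cyl z = (cos (fst z), sin (fst z), snd z)"

definition regular_value :: "(real \<times> real \<Rightarrow> real) \<Rightarrow> real \<Rightarrow> bool" where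
  "regular_value H c \<longleftrightarrow>
     (\<forall>x. H x = c \<longrightarrow> H differentiable (at x) \<and> \<not> (H has_derivative (\<lambda>v. 0)) (at x))"

definition ham_solution :: "(real \<times> real \<Rightarrow> real) \<Rightarrow> (real \<Rightarrow> real \<times> real) \<Rightarrow> bool" where
  "ham_solution H z \<longleftrightarrow>
     (\<forall>t. \<exists>DH. (H has_derivative DH) (at (z t)) \<and>
              (z has_vector_derivative (DH (0, 1), - DH (1, 0))) (at t))"

definition period :: "(real \<Rightarrow> 'a) \<Rightarrow> real" where
  "period f = Inf {T. T > 0 \<and> (\<forall>t. f (t + T) = f t)}"

definition level_set :: "real \<Rightarrow> real \<Rightarrow> real \<Rightarrow> real \<Rightarrow> real \<Rightarrow> ((real \<times> real) \<times> (real \<times> real \<times> real)) set" where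
  "level_set d m1 m2 h g = {(zl, c). Hlam d m1 m2 h zl = - g \<and> c \<in> cyl ` {zn. Hnu d m1 m2 h zn = g}}"

definition regular_torus :: "real \<Rightarrow> real \<Rightarrow> real \<Rightarrow> real \<Rightarrow> real \<Rightarrow> ((real \<times> real) \<times> (real \<times> real \<times> real)) set \<Rightarrow> bool" where
  "regular_torus d m1 m2 h g TT \<longleftrightarrow>
     regular_value (Hlam d m1 m2 h) (- g) \<and> regular_value (Hnu d m1 m2 h) g \<and>
     (\<exists>x \<in> level_set d m1 m2 h g. TT = connected_component_set (level_set d m1 m2 h g) x) \<and>
     compact TT"

definition collision :: "real \<times> real \<Rightarrow> real \<times> real \<Rightarrow> bool" where
  "collision zl zn \<longleftrightarrow> fst zl = 0 \<and> (\<exists>k::int. fst zn = pi/2 + k * pi)"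

end

theory Submission
  imports Defs "HOL-Analysis.Analysis"
begin

definition loclip :: "(real \<Rightarrow> real) \<Rightarrow> bool" where
  "loclip f \<longleftrightarrow> (\<forall>R. \<exists>L. \<forall>a b. \<bar>a\<bar> \<le> R \<longrightarrow> \<bar>b\<bar> \<le> R \<longrightarrow> \<bar>f a - f b\<bar> \<le> L * \<bar>a - b\<bar>)"

definition sol :: "(real \<Rightarrow> real) \<Rightarrow> (real \<Rightarrow> real) \<Rightarrow> (real \<Rightarrow> real) \<Rightarrow> bool" where
  "sol dV q p \<longleftrightarrow> (\<forall>t. (q has_real_derivative p t) (at t) \<and> (p has_real_derivative - dV (q t)) (at t))"

lemma sol_reverse:
  assumes "sol dV q p"
  shows "sol dV (\<lambda>s. q (c - s)) (\<lambda>s. - p (c - s))"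
  unfolding sol_def
proof
  fix s
  have d: "((\<lambda>s. c - s) has_real_derivative -1) (at s)"
    by (auto intro!: derivative_eq_intros)
  have a: "(q has_real_derivative p (c - s)) (at (c - s))"
   and b: "(p has_real_derivative - dV (q (c - s))) (at (c - s))" using assms unfolding sol_def by auto
  show "((\<lambda>s. q (c - s)) has_real_derivative - p (c - s)) (at s) \<and>
         ((\<lambda>s. - p (c - s)) has_real_derivative - dV (q (c - s))) (at s)"
    using DERIV_chain2[OF a d] DERIV_minus[OF DERIV_chain2[OF b d]] by simp
qed

lemma sol_shift:
  assumes "sol dV q p" and per: "\<And>x. dV (x + a) = dV x"
  shows "sol dV (\<lambda>s. q (s + T) + a) (\<lambda>s. p (s + T))"
  unfolding sol_def
proof
  fix s
  have d: "((\<lambda>s. s + T) has_real_derivative 1) (at s)"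
    by (auto intro!: derivative_eq_intros)
  have a: "(q has_real_derivative p (s + T)) (at (s + T))"
   and b: "(p has_real_derivative - dV (q (s + T))) (at (s + T))" using assms unfolding sol_def by auto
  show "((\<lambda>s. q (s + T) + a) has_real_derivative p (s + T)) (at s) \<and>
         ((\<lambda>s. p (s + T)) has_real_derivative - dV (q (s + T) + a)) (at s)"
    using DERIV_add[OF DERIV_chain2[OF a d] DERIV_const[of a]] DERIV_chain2[OF b d] per by simp
qed

lemma sol_cont: "sol dV q p \<Longrightarrow> isCont q t \<and> isCont p t"
  unfolding sol_def using DERIV_isCont by blast

lemma uniq_fwd:
  assumes lip: "loclip dV" and s1: "sol dV q1 p1" and s2: "sol dV q2 p2"
    and e: "q1 a = q2 a" "p1 a = p2 a" and ab: "a \<le> b"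
  shows "q1 b = q2 b \<and> p1 b = p2 b"
proof -
  obtain M1 where M1: "\<forall>x. a \<le> x \<and> x \<le> b \<longrightarrow> \<bar>q1 x\<bar> \<le> M1"
    using isCont_bounded[OF ab, of "\<lambda>x. \<bar>q1 x\<bar>"] sol_cont[OF s1] by (auto intro: continuous_intros)
  obtain M2 where M2: "\<forall>x. a \<le> x \<and> x \<le> b \<longrightarrow> \<bar>q2 x\<bar> \<le> M2"
    using isCont_bounded[OF ab, of "\<lambda>x. \<bar>q2 x\<bar>"] sol_cont[OF s2] by (auto intro: continuous_intros)
  obtain L0 where L0: "\<forall>x y. \<bar>x\<bar> \<le> max M1 M2 \<longrightarrow> \<bar>y\<bar> \<le> max M1 M2 \<longrightarrow> \<bar>dV x - dV y\<bar> \<le> L0 * \<bar>x - y\<bar>"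
    using lip unfolding loclip_def by blast
  define L where "L = \<bar>L0\<bar>"
  have L: "\<bar>dV x - dV y\<bar> \<le> L * \<bar>x - y\<bar>" if "\<bar>x\<bar> \<le> max M1 M2" "\<bar>y\<bar> \<le> max M1 M2" for x y
  proof -
    have "L0 * \<bar>x - y\<bar> \<le> L * \<bar>x - y\<bar>" unfolding L_def by (simp add: mult_right_mono)
    then show ?thesis using L0 that by fastforce
  qed
  have L0': "L \<ge> 0" unfolding L_def by simp
  define K where "K = 1 + L"
  define u where "u t = (q1 t - q2 t)^2 + (p1 t - p2 t)^2" for t
  define w where "w t = u t * exp (- K * t)" for t
  have "w b \<le> w a"
  proof (rule DERIV_nonpos_imp_nonincreasing[OF ab])
    fix x assume x: "a \<le> x" "x \<le> b"
    have d1: "(q1 has_real_derivative p1 x) (at x)" "(p1 has_real_derivative - dV (q1 x)) (at x)"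
      using s1 unfolding sol_def by auto
    have d2: "(q2 has_real_derivative p2 x) (at x)" "(p2 has_real_derivative - dV (q2 x)) (at x)"
      using s2 unfolding sol_def by auto
    define D where "D = 2 * (q1 x - q2 x) * (p1 x - p2 x) + 2 * (p1 x - p2 x) * (- dV (q1 x) + dV (q2 x))"
    have du: "(u has_real_derivative D) (at x)"
      unfolding u_def[abs_def] D_def
      by (auto intro!: derivative_eq_intros d1 d2 simp: algebra_simps)
    have dw: "(w has_real_derivative (D * exp (- K * x) + u x * (exp (- K * x) * (- K)))) (at x)"
      unfolding w_def[abs_def]
      by (auto intro!: derivative_eq_intros du)
    have "D \<le> K * u x"
    proof -
      have h1: "2 * (q1 x - q2 x) * (p1 x - p2 x) \<le> (q1 x - q2 x)^2 + (p1 x - p2 x)^2"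
        using sum_squares_bound[of "q1 x - q2 x" "p1 x - p2 x"] by simp
      have lx: "\<bar>dV (q1 x) - dV (q2 x)\<bar> \<le> L * \<bar>q1 x - q2 x\<bar>"
        using L M1 M2 x by (meson max.coboundedI1 max.coboundedI2 order_trans)
      have "2 * (p1 x - p2 x) * (- dV (q1 x) + dV (q2 x)) \<le> 2 * \<bar>p1 x - p2 x\<bar> * \<bar>dV (q1 x) - dV (q2 x)\<bar>"
      proof -
        have "(p1 x - p2 x) * (- dV (q1 x) + dV (q2 x)) \<le> \<bar>(p1 x - p2 x) * (- dV (q1 x) + dV (q2 x))\<bar>"
          by (rule abs_ge_self)
        also have "\<dots> = \<bar>p1 x - p2 x\<bar> * \<bar>dV (q1 x) - dV (q2 x)\<bar>"
          by (simp add: abs_mult abs_minus_commute)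
        finally have "(p1 x - p2 x) * (- dV (q1 x) + dV (q2 x)) \<le> \<bar>p1 x - p2 x\<bar> * \<bar>dV (q1 x) - dV (q2 x)\<bar>" .
        then show ?thesis by (simp only: mult.assoc mult_le_cancel_left) simp
      qed
      also have "\<dots> \<le> 2 * \<bar>p1 x - p2 x\<bar> * (L * \<bar>q1 x - q2 x\<bar>)"
        using lx by (simp add: mult_left_mono)
      also have "\<dots> = L * (2 * \<bar>p1 x - p2 x\<bar> * \<bar>q1 x - q2 x\<bar>)" by simp
      also have "\<dots> \<le> L * ((q1 x - q2 x)^2 + (p1 x - p2 x)^2)"
      proof (rule mult_left_mono[OF _ L0'])
        show "2 * \<bar>p1 x - p2 x\<bar> * \<bar>q1 x - q2 x\<bar> \<le> (q1 x - q2 x)\<^sup>2 + (p1 x - p2 x)\<^sup>2"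
          using sum_squares_bound[of "\<bar>p1 x - p2 x\<bar>" "\<bar>q1 x - q2 x\<bar>"] by (simp add: power2_abs add.commute)
      qed
      finally show ?thesis using h1 unfolding D_def K_def u_def by (simp add: algebra_simps)
    qed
    then have "D * exp (- K * x) + u x * (exp (- K * x) * (- K)) \<le> 0"
      by (simp add: algebra_simps mult_right_mono)
    then show "\<exists>y. (w has_real_derivative y) (at x) \<and> y \<le> 0" using dw by blast
  qed
  moreover have "w a = 0" unfolding w_def u_def using e by simp
  ultimately have "u b \<le> 0" unfolding w_def by (simp add: mult_le_0_iff)
  then have "(q1 b - q2 b)^2 = 0" "(p1 b - p2 b)^2 = 0" unfolding u_def
    using zero_le_power2[of "q1 b - q2 b"] zero_le_power2[of "p1 b - p2 b"] by linarith+
  then show ?thesis by simp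
qed

lemma uniq:
  assumes lip: "loclip dV" and s1: "sol dV q1 p1" and s2: "sol dV q2 p2"
    and e: "q1 a = q2 a" "p1 a = p2 a"
  shows "q1 t = q2 t \<and> p1 t = p2 t"
proof (cases "a \<le> t")
  case True then show ?thesis using uniq_fwd[OF lip s1 s2 e] by blast
next
  case False
  have r1: "sol dV (\<lambda>s. q1 (0 - s)) (\<lambda>s. - p1 (0 - s))" by (rule sol_reverse[OF s1])
  have r2: "sol dV (\<lambda>s. q2 (0 - s)) (\<lambda>s. - p2 (0 - s))" by (rule sol_reverse[OF s2])
  from uniq_fwd[OF lip r1 r2, of "-a" "-t"] e False show ?thesis by simp
qed


lemma escape:
  assumes dV: "\<And>x. (V has_real_derivative dV x) (at x)" and cdV: "\<And>x. isCont dV x"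
    and s: "sol dV q p" and en: "\<And>t. (p t)^2/2 + V (q t) = E"
    and reg: "\<And>x. V x = E \<Longrightarrow> dV x \<noteq> 0"
    and pos: "\<And>t. t \<ge> t0 \<Longrightarrow> p t > 0"
  shows "\<exists>t\<ge>t0. q t > B"
proof (rule ccontr)
  assume "\<not> ?thesis"
  then have bd: "\<And>t. t \<ge> t0 \<Longrightarrow> q t \<le> B" by (auto simp: not_less)
  have dq: "\<And>t. (q has_real_derivative p t) (at t)" and dp: "\<And>t. (p has_real_derivative - dV (q t)) (at t)"
    using s unfolding sol_def by auto
  have mono: "q s \<le> q t" if "t0 \<le> s" "s \<le> t" for s t
    using DERIV_nonneg_imp_nondecreasing[OF that(2), of q] dq pos that by (meson less_imp_le order_trans)
  define L where "L = Sup (q ` {t0..})"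
  have bdd: "bdd_above (q ` {t0..})" using bd by (auto intro!: bdd_aboveI)
  have le: "q t \<le> L" if "t \<ge> t0" for t unfolding L_def using bdd that by (auto intro!: cSup_upper)
  have lim: "(q \<longlongrightarrow> L) at_top"
  proof (rule tendstoI)
    fix e :: real assume e: "e > 0"
    have "L - e < Sup (q ` {t0..})" using e L_def by simp
    then obtain t1 where t1: "t1 \<ge> t0" "q t1 > L - e" using less_cSupD[of "q ` {t0..}" "L - e"] by auto
    show "\<forall>\<^sub>F t in at_top. dist (q t) L < e"
      unfolding eventually_at_top_linorder
    proof (intro exI allI impI)
      fix t assume "t \<ge> t1"
      then have "q t \<ge> q t1" "q t \<le> L" using mono[OF t1(1)] le t1(1) by auto
      then show "dist (q t) L < e" using t1 by (simp add: dist_real_def)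
    qed
  qed
  have cV: "isCont V L" using dV DERIV_isCont by blast
  have limV: "((\<lambda>t. V (q t)) \<longlongrightarrow> V L) at_top" by (rule isCont_tendsto_compose[OF cV lim])
  have p2: "(p t)^2 = 2 * (E - V (q t))" for t using en[of t] by simp
  have limp: "((\<lambda>t. (p t)^2) \<longlongrightarrow> 2 * (E - V L)) at_top"
    unfolding p2 by (auto intro!: tendsto_intros limV)
  have limdV: "((\<lambda>t. dV (q t)) \<longlongrightarrow> dV L) at_top" by (rule isCont_tendsto_compose[OF cdV lim])
  have e0: "E - V L \<ge> 0"
  proof (rule ccontr)
    assume "\<not> ?thesis"
    then have "2 * (E - V L) < 0" by simp
    from order_tendstoD(2)[OF limp this] obtain N where "\<forall>t\<ge>N. (p t)^2 < 0"
      unfolding eventually_at_top_linorder by auto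
    then show False by (metis order.refl not_less zero_le_power2)
  qed
  show False
  proof (cases "E - V L > 0")
    case True
    define c where "c = sqrt (E - V L)"
    have c: "c > 0" "c^2 = E - V L" using True unfolding c_def by auto
    have "E - V L < 2 * (E - V L)" using True by simp
    from order_tendstoD(1)[OF limp this] obtain N where N: "\<forall>t\<ge>N. E - V L < (p t)^2"
      unfolding eventually_at_top_linorder by auto
    define t1 where "t1 = max N t0"
    have pc: "p t \<ge> c" if "t \<ge> t1" for t
    proof -
      have "c^2 < (p t)^2" using N c that unfolding t1_def by auto
      moreover have "p t > 0" using pos that unfolding t1_def by auto
      ultimately show ?thesis using c by (meson less_imp_le power_less_imp_less_base)
    qed
    have lin: "q t1 + c * (t - t1) \<le> q t" if "t \<ge> t1" for t
    proof -
      have "(\<lambda>t. q t - c * t) t1 \<le> (\<lambda>t. q t - c * t) t"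
      proof (rule DERIV_nonneg_imp_nondecreasing[OF that])
        fix x assume "t1 \<le> x" "x \<le> t"
        then show "\<exists>y. ((\<lambda>t. q t - c * t) has_real_derivative y) (at x) \<and> y \<ge> 0"
          using pc[of x] by (auto intro!: derivative_eq_intros dq exI[of _ "p x - c"])
      qed
      then show ?thesis by (simp add: algebra_simps)
    qed
    define t where "t = t1 + \<bar>B - q t1\<bar> / c + 1"
    have "t \<ge> t1" using c unfolding t_def by simp
    then have "q t1 + c * (t - t1) \<le> q t" by (rule lin)
    moreover have "c * (t - t1) = \<bar>B - q t1\<bar> + c" unfolding t_def using c by (simp add: field_simps)
    moreover have "q t \<le> B" using bd \<open>t \<ge> t1\<close> unfolding t1_def by auto
    ultimately show False using c by linarith
  next
    case False
    then have VL: "V L = E" using e0 by simp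
    have a0: "dV L \<noteq> 0" using reg[OF VL] .
    show False
    proof (cases "dV L > 0")
      case True
      have "dV L / 2 < dV L" using True by simp
      from order_tendstoD(1)[OF limdV this] obtain N where N: "\<forall>t\<ge>N. dV L / 2 < dV (q t)"
        unfolding eventually_at_top_linorder by auto
      define t1 where "t1 = max N t0"
      define a where "a = dV L / 2"
      have a: "a > 0" using True unfolding a_def by simp
      have lin: "p t \<le> p t1 - a * (t - t1)" if "t \<ge> t1" for t
      proof -
        have "(\<lambda>t. p t + a * t) t \<le> (\<lambda>t. p t + a * t) t1"
        proof (rule DERIV_nonpos_imp_nonincreasing[OF that])
          fix x assume "t1 \<le> x" "x \<le> t"
          then have "a < dV (q x)" using N unfolding t1_def a_def by auto
          then show "\<exists>y. ((\<lambda>t. p t + a * t) has_real_derivative y) (at x) \<and> y \<le> 0"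
            by (auto intro!: derivative_eq_intros dp exI[of _ "- dV (q x) + a"])
        qed
        then show ?thesis by (simp add: algebra_simps)
      qed
      define t where "t = t1 + \<bar>p t1\<bar> / a + 1"
      have "t \<ge> t1" using a unfolding t_def by simp
      then have "p t \<le> p t1 - a * (t - t1)" by (rule lin)
      moreover have "a * (t - t1) = \<bar>p t1\<bar> + a" unfolding t_def using a by (simp add: field_simps)
      moreover have "p t > 0" using pos \<open>t \<ge> t1\<close> unfolding t1_def by auto
      ultimately show False using a by linarith
    next
      case False
      then have neg: "dV L < 0" using a0 by simp
      from order_tendstoD(2)[OF limdV neg] obtain N where N: "\<forall>t\<ge>N. dV (q t) < 0"
        unfolding eventually_at_top_linorder by auto
      define t1 where "t1 = max N t0"
      have incp: "p t1 \<le> p t" if "t \<ge> t1" for t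
      proof (rule DERIV_nonneg_imp_nondecreasing[OF that])
        fix x assume "t1 \<le> x" "x \<le> t"
        then have "dV (q x) < 0" using N unfolding t1_def by auto
        then show "\<exists>y. (p has_real_derivative y) (at x) \<and> y \<ge> 0"
          using dp by (auto intro!: exI[of _ "- dV (q x)"])
      qed
      have pt1: "p t1 > 0" using pos unfolding t1_def by auto
      have "2 * (E - V L) < (p t1)^2" using VL pt1 by simp
      from order_tendstoD(2)[OF limp this] obtain N2 where N2: "\<forall>t\<ge>N2. (p t)^2 < (p t1)^2"
        unfolding eventually_at_top_linorder by auto
      define t where "t = max N2 t1"
      have "(p t)^2 < (p t1)^2" using N2 unfolding t_def by auto
      moreover have "p t1 \<le> p t" using incp unfolding t_def by auto
      ultimately show False using pt1 by (smt (verit) power_mono)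
    qed
  qed
qed


lemma escape_neg:
  assumes dV: "\<And>x. (V has_real_derivative dV x) (at x)" and cdV: "\<And>x. isCont dV x"
    and s: "sol dV q p" and en: "\<And>t. (p t)^2/2 + V (q t) = E"
    and reg: "\<And>x. V x = E \<Longrightarrow> dV x \<noteq> 0"
    and neg: "\<And>t. t \<ge> t0 \<Longrightarrow> p t < 0"
  shows "\<exists>t\<ge>t0. q t < B"
proof -
  have d1: "\<And>x. ((\<lambda>x. V (- x)) has_real_derivative (\<lambda>x. - dV (- x)) x) (at x)"
  proof -
    fix x
    have m: "((\<lambda>x. - x) has_real_derivative -1) (at x)" by (auto intro!: derivative_eq_intros)
    show "((\<lambda>x. V (- x)) has_real_derivative (\<lambda>x. - dV (- x)) x) (at x)"
      using DERIV_chain2[OF dV[of "-x"] m] by simp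
  qed
  have c1: "\<And>x. isCont (\<lambda>x. - dV (- x)) x"
  proof -
    fix x
    have "isCont dV (- x)" by (rule cdV)
    then have "isCont (\<lambda>x. dV (- x)) x" by (rule isCont_o2[rotated]) (auto intro!: continuous_intros)
    then show "isCont (\<lambda>x. - dV (- x)) x" by (rule isCont_minus)
  qed
  have s1: "sol (\<lambda>x. - dV (- x)) (\<lambda>t. - q t) (\<lambda>t. - p t)"
    unfolding sol_def
  proof
    fix t
    have a: "(q has_real_derivative p t) (at t)" "(p has_real_derivative - dV (q t)) (at t)"
      using s unfolding sol_def by auto
    show "((\<lambda>t. - q t) has_real_derivative - p t) (at t) \<and>
      ((\<lambda>t. - p t) has_real_derivative - (- dV (- (- q t)))) (at t)"
      using DERIV_minus[OF a(1)] DERIV_minus[OF a(2)] by simp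
  qed
  have "\<exists>t\<ge>t0. - q t > - B"
    by (rule escape[OF d1 c1 s1, of E]) (use en reg neg in auto)
  then show ?thesis by auto
qed

lemma zero_or_escape:
  assumes s: "sol dV q p"
  shows "(\<exists>t2>t1. p t2 = 0) \<or> (\<forall>t>t1. p t > 0) \<or> (\<forall>t>t1. p t < 0)"
proof (rule ccontr)
  assume A: "\<not> ?thesis"
  then have nz: "\<And>t. t > t1 \<Longrightarrow> p t \<noteq> 0" by auto
  have c: "\<And>t. isCont p t" using sol_cont[OF s] by blast
  obtain u v where uv: "u > t1" "v > t1" "p u > 0" "p v < 0"
    using A nz by (metis linorder_neqE_linordered_idom)
  show False
  proof (cases "u \<le> v")
    case True
    obtain x where "u \<le> x" "x \<le> v" "p x = 0" using IVT2[of p v 0 u] True uv c by auto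
    then show False using nz uv by auto
  next
    case False
    obtain x where "v \<le> x" "x \<le> u" "p x = 0" using IVT[of p v 0 u] False uv c by auto
    then show False using nz uv by auto
  qed
qed

lemma libration:
  assumes lip: "loclip dV" and s: "sol dV q p" and z: "p t1 = 0" "p t2 = 0"
  shows "q (t + 2 * (t2 - t1)) = q t \<and> p (t + 2 * (t2 - t1)) = p t"
proof -
  have r1: "\<forall>s. q (2 * t1 - s) = q s \<and> - p (2 * t1 - s) = p s"
    using uniq[OF lip sol_reverse[OF s, of "2 * t1"] s, of t1] z by auto
  have r2: "\<forall>s. q (2 * t2 - s) = q s \<and> - p (2 * t2 - s) = p s"
    using uniq[OF lip sol_reverse[OF s, of "2 * t2"] s, of t2] z by auto
  have e: "t + 2 * (t2 - t1) = 2 * t2 - (2 * t1 - t)" by simp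
  show ?thesis unfolding e using r1 r2 by (metis minus_minus)
qed

lemma bounded_periodic:
  assumes dV: "\<And>x. (V has_real_derivative dV x) (at x)" and cdV: "\<And>x. isCont dV x"
    and lip: "loclip dV"
    and s: "sol dV q p" and en: "\<And>t. (p t)^2/2 + V (q t) = E"
    and reg: "\<And>x. V x = E \<Longrightarrow> dV x \<noteq> 0"
    and bd: "\<And>t. \<bar>q t\<bar> \<le> R"
  shows "\<exists>T>0. \<forall>t. q (t + T) = q t \<and> p (t + T) = p t"
proof -
  have Z: "\<exists>t2>t1. p t2 = 0" for t1
  proof -
    have "\<not> (\<forall>t>t1. p t > 0)"
    proof
      assume "\<forall>t>t1. p t > 0"
      then obtain t where "q t > R"
        using escape[OF dV cdV s en reg, of "t1 + 1" R] by auto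
      then show False using bd[of t] by simp
    qed
    moreover have "\<not> (\<forall>t>t1. p t < 0)"
    proof
      assume "\<forall>t>t1. p t < 0"
      then obtain t where "q t < - R"
        using escape_neg[OF dV cdV s en reg, of "t1 + 1" "-R"] by auto
      then show False using bd[of t] by simp
    qed
    ultimately show ?thesis using zero_or_escape[OF s, of t1] by blast
  qed
  obtain t2 where t2: "p t2 = 0" using Z by blast
  obtain t3 where t3: "t3 > t2" "p t3 = 0" using Z by blast
  show ?thesis
    using libration[OF lip s t2 t3(2)] t3(1) by (intro exI[of _ "2 * (t3 - t2)"]) auto
qed

lemma rotation_periodic:
  assumes dV: "\<And>x. (V has_real_derivative dV x) (at x)" and cdV: "\<And>x. isCont dV x"
    and lip: "loclip dV"
    and s: "sol dV q p" and en: "\<And>t. (p t)^2/2 + V (q t) = E"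
    and reg: "\<And>x. V x = E \<Longrightarrow> dV x \<noteq> 0"
    and perV: "\<And>x. V (x + 2 * pi) = V x" and perdV: "\<And>x. dV (x + 2 * pi) = dV x"
  shows "\<exists>T>0. \<forall>t. cos (q (t + T)) = cos (q t) \<and> sin (q (t + T)) = sin (q t) \<and> p (t + T) = p t"
proof -
  have perV': "\<And>x. V (x - 2 * pi) = V x" using perV by (metis diff_add_cancel)
  have perdV': "\<And>x. dV (x + - (2 * pi)) = dV x" using perdV by (metis add_diff_cancel_right' diff_add_cancel add_uminus_conv_diff)
  have cq: "\<And>t. isCont q t" using sol_cont[OF s] by blast
  have p2: "(p t)^2 = 2 * (E - V (q t))" for t using en[of t] by simp
  show ?thesis
  proof (cases "\<exists>t2. p t2 = 0")
    case True
    then obtain t2 where t2: "p t2 = 0" by blast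
    have "\<exists>t3>t2. p t3 = 0"
    proof -
      have "\<not> (\<forall>t>t2. p t > 0)"
      proof
        assume P: "\<forall>t>t2. p t > 0"
        then obtain t where t: "t \<ge> t2 + 1" "q t > q t2 + 2 * pi"
          using escape[OF dV cdV s en reg, of "t2 + 1" "q t2 + 2 * pi"] by auto
        obtain x where x: "t2 \<le> x" "x \<le> t" "q x = q t2 + 2 * pi"
          using IVT[of q t2 "q t2 + 2 * pi" t] t cq by auto
        have "x \<noteq> t2" using x(3) pi_gt_zero by (metis add_cancel_left_right mult_eq_0_iff pi_neq_zero zero_neq_numeral)
        then have "p x > 0" using P x by auto
        moreover have "(p x)^2 = (p t2)^2" using p2[of x] p2[of t2] x(3) perV by simp
        ultimately show False using t2 by simp
      qed
      moreover have "\<not> (\<forall>t>t2. p t < 0)"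
      proof
        assume P: "\<forall>t>t2. p t < 0"
        then obtain t where t: "t \<ge> t2 + 1" "q t < q t2 - 2 * pi"
          using escape_neg[OF dV cdV s en reg, of "t2 + 1" "q t2 - 2 * pi"] by auto
        obtain x where x: "t2 \<le> x" "x \<le> t" "q x = q t2 - 2 * pi"
          using IVT2[of q t "q t2 - 2 * pi" t2] t cq by auto
        have "x \<noteq> t2" using x(3) pi_gt_zero by auto
        then have "p x < 0" using P x by auto
        moreover have "(p x)^2 = (p t2)^2" using p2[of x] p2[of t2] x(3) perV' by simp
        ultimately show False using t2 by simp
      qed
      ultimately show ?thesis using zero_or_escape[OF s, of t2] by blast
    qed
    then obtain t3 where t3: "t3 > t2" "p t3 = 0" by blast
    show ?thesis
      using libration[OF lip s t2 t3(2)] t3(1) by (intro exI[of _ "2 * (t3 - t2)"]) auto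
  next
    case False
    then have nz: "\<And>t. p t \<noteq> 0" by blast
    have cases: "(\<forall>t>0. p t > 0) \<or> (\<forall>t>0. p t < 0)" using zero_or_escape[OF s, of 0] nz by blast
    then show ?thesis
    proof
      assume P: "\<forall>t>0. p t > 0"
      then obtain t where t: "t \<ge> 1" "q t > q 1 + 2 * pi"
        using escape[OF dV cdV s en reg, of 1 "q 1 + 2 * pi"] by auto
      obtain x where x: "1 \<le> x" "x \<le> t" "q x = q 1 + 2 * pi"
        using IVT[of q 1 "q 1 + 2 * pi" t] t cq by auto
      have "x \<noteq> 1" using x(3) pi_gt_zero by auto
      then have xg: "x > 1" using x by auto
      have "(p x)^2 = (p 1)^2" using p2[of x] p2[of 1] x(3) perV by simp
      moreover have "p x > 0" "p 1 > 0" using P xg by auto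
      ultimately have px: "p x = p 1" by (simp add: power2_eq_iff_nonneg)
      define T where "T = x - 1"
      have sh: "sol dV (\<lambda>s. q (s + T) + - (2 * pi)) (\<lambda>s. p (s + T))"
        by (rule sol_shift[OF s perdV'])
      have U: "\<forall>t. q (t + T) + - (2 * pi) = q t \<and> p (t + T) = p t"
        using uniq[OF lip sh s, of 1] x(3) px unfolding T_def by auto
      show ?thesis
      proof (intro exI[of _ T] conjI allI)
        show "T > 0" using xg unfolding T_def by simp
        fix t
        have "q (t + T) = q t + 2 * pi" using U by (metis add_diff_cancel_right' diff_add_cancel add_uminus_conv_diff)
        then show "cos (q (t + T)) = cos (q t)" "sin (q (t + T)) = sin (q t)" "p (t + T) = p t"
          using U by auto
      qed
    next
      assume P: "\<forall>t>0. p t < 0"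
      then obtain t where t: "t \<ge> 1" "q t < q 1 - 2 * pi"
        using escape_neg[OF dV cdV s en reg, of 1 "q 1 - 2 * pi"] by auto
      obtain x where x: "1 \<le> x" "x \<le> t" "q x = q 1 - 2 * pi"
        using IVT2[of q t "q 1 - 2 * pi" 1] t cq by auto
      have "x \<noteq> 1" using x(3) pi_gt_zero by auto
      then have xg: "x > 1" using x by auto
      have "(p x)^2 = (p 1)^2" using p2[of x] p2[of 1] x(3) perV' by simp
      moreover have "p x < 0" "p 1 < 0" using P xg by auto
      ultimately have px: "p x = p 1" by (simp add: power2_eq_iff)
      define T where "T = x - 1"
      have sh: "sol dV (\<lambda>s. q (s + T) + 2 * pi) (\<lambda>s. p (s + T))"
        by (rule sol_shift[OF s perdV])
      have U: "\<forall>t. q (t + T) + 2 * pi = q t \<and> p (t + T) = p t"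
        using uniq[OF lip sh s, of 1] x(3) px unfolding T_def by auto
      show ?thesis
      proof (intro exI[of _ T] conjI allI)
        show "T > 0" using xg unfolding T_def by simp
        fix t
        have "q t = q (t + T) + 2 * pi" using U by metis
        then have "cos (q t) = cos (q (t + T))" "sin (q t) = sin (q (t + T))" by auto
        then show "cos (q (t + T)) = cos (q t)" "sin (q (t + T)) = sin (q t)" "p (t + T) = p t"
          using U by auto
      qed
    qed
  qed
qed


lemma period_attained:
  fixes f :: "real \<Rightarrow> 'a::t2_space" and g :: "'a \<Rightarrow> real"
  assumes cont: "\<And>t. isCont f t" and T0: "T0 > 0" "\<And>t. f (t + T0) = f t"
    and der: "((\<lambda>t. g (f t)) has_real_derivative D) (at t0)" and D0: "D \<noteq> 0"
  shows "period f > 0 \<and> (\<forall>t. f (t + period f) = f t)"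
proof -
  obtain \<delta> where \<delta>: "\<delta> > 0" "\<And>h. h > 0 \<Longrightarrow> h < \<delta> \<Longrightarrow> g (f (t0 + h)) \<noteq> g (f t0)"
  proof (cases "D > 0")
    case True
    from DERIV_pos_inc_right[OF der True] obtain d where "d > 0" "\<forall>h>0. h < d \<longrightarrow> g (f t0) < g (f (t0 + h))" by blast
    then show ?thesis using that[of d] by force
  next
    case False
    then have "D < 0" using D0 by simp
    from DERIV_neg_dec_right[OF der this] obtain d where "d > 0" "\<forall>h>0. h < d \<longrightarrow> g (f t0) > g (f (t0 + h))" by blast
    then show ?thesis using that[of d] by force
  qed
  define S where "S = {T. T > 0 \<and> (\<forall>t. f (t + T) = f t)}"
  have SC: "S = {T. \<forall>t. f (t + T) = f t} \<inter> {\<delta>..}"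
  proof (intro set_eqI iffI)
    fix T assume "T \<in> S"
    then have T: "T > 0" "\<forall>t. f (t + T) = f t" unfolding S_def by auto
    have "T \<ge> \<delta>" using \<delta>(2)[of T] T by force
    then show "T \<in> {T. \<forall>t. f (t + T) = f t} \<inter> {\<delta>..}" using T by auto
  next
    fix T assume "T \<in> {T. \<forall>t. f (t + T) = f t} \<inter> {\<delta>..}"
    then show "T \<in> S" unfolding S_def using \<delta>(1) by auto
  qed
  have cl: "closed S" unfolding SC
  proof (intro closed_Int closed_Collect_all closed_atLeast)
    fix t
    have "continuous_on UNIV (\<lambda>T. f (t + T))"
      by (rule continuous_at_imp_continuous_on) (auto intro!: continuous_intros isCont_o2[OF _ cont])
    then show "closed {T. f (t + T) = f t}"
      by (rule closed_Collect_eq) (rule continuous_on_const)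
  qed
  have ne: "S \<noteq> {}" using T0 unfolding S_def by auto
  have bb: "bdd_below S" unfolding S_def by (auto intro!: bdd_belowI[of _ 0])
  have "Inf S \<in> S" by (rule closed_contains_Inf[OF ne bb cl])
  moreover have "period f = Inf S" unfolding period_def S_def by simp
  ultimately show ?thesis unfolding S_def by simp
qed

lemma per_iter: "(\<forall>t. f (t + T) = f t) \<Longrightarrow> f (t + of_nat n * T) = f t"
proof (induction n arbitrary: t)
  case 0 then show ?case by simp
next
  case (Suc n)
  have "f (t + of_nat (Suc n) * T) = f ((t + of_nat n * T) + T)" by (simp add: algebra_simps)
  also have "\<dots> = f (t + of_nat n * T)" using Suc.prems by blast
  finally show ?case using Suc by simp
qed

lemma loclip_C1:
  assumes d: "\<And>x. (f has_real_derivative f' x) (at x)" and c: "\<And>x. isCont f' x"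
  shows "loclip f"
  unfolding loclip_def
proof
  fix R :: real
  show "\<exists>L. \<forall>a b. \<bar>a\<bar> \<le> R \<longrightarrow> \<bar>b\<bar> \<le> R \<longrightarrow> \<bar>f a - f b\<bar> \<le> L * \<bar>a - b\<bar>"
  proof (cases "-R \<le> R")
    case False
    then show ?thesis by auto
  next
    case True
    obtain M where M: "\<forall>x. -R \<le> x \<and> x \<le> R \<longrightarrow> \<bar>f' x\<bar> \<le> M"
      using isCont_bounded[OF True, of "\<lambda>x. \<bar>f' x\<bar>"] c by (auto intro: continuous_intros)
    have key: "\<bar>f b - f a\<bar> \<le> M * \<bar>b - a\<bar>" if ab0: "a < b" "\<bar>a\<bar> \<le> R" "\<bar>b\<bar> \<le> R" for a b
    proof -
      obtain z where z: "a < z" "z < b" "f b - f a = (b - a) * f' z"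
        using MVT2[OF ab0(1), of f f'] d by metis
      have "-R \<le> z \<and> z \<le> R" using z ab0 by linarith
      then have "\<bar>f' z\<bar> \<le> M" using M by blast
      then show ?thesis using z ab0 by (simp add: abs_mult mult.commute mult_left_mono)
    qed
    show ?thesis
    proof (intro exI allI impI)
      fix a b assume ab: "\<bar>a\<bar> \<le> R" "\<bar>b\<bar> \<le> R"
      consider "a < b" | "a = b" | "b < a" by linarith
      then show "\<bar>f a - f b\<bar> \<le> M * \<bar>a - b\<bar>"
      proof cases
        case 1 then show ?thesis using key[OF 1 ab] by (simp add: abs_minus_commute)
      next
        case 2 then show ?thesis by simp
      next
        case 3 then show ?thesis using key[OF 3 ab(2,1)] by simp
      qed
    qed
  qed
qed

lemma H_deriv:
  assumes dV: "\<And>x. (V has_real_derivative dV x) (at x)"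
  shows "((\<lambda>z::real\<times>real. (snd z)^2/2 + V (fst z)) has_derivative
           (\<lambda>w. snd z0 * snd w + dV (fst z0) * fst w)) (at z0)"
proof -
  have a: "((\<lambda>z::real\<times>real. V (fst z)) has_derivative (\<lambda>w. fst w * dV (fst z0))) (at z0)"
    by (rule DERIV_compose_FDERIV[OF dV]) (rule has_derivative_fst[OF has_derivative_ident])
  have b: "((\<lambda>z::real\<times>real. (snd z)^2/2) has_derivative (\<lambda>w. snd z0 * snd w)) (at z0)"
    by (auto intro!: derivative_eq_intros)
  show ?thesis using has_derivative_add[OF b a] by (simp add: mult.commute)
qed

lemma ham_to_sol:
  assumes h: "ham_solution (\<lambda>z::real\<times>real. (snd z)^2/2 + V (fst z)) z"
    and dV: "\<And>x. (V has_real_derivative dV x) (at x)"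
  shows "sol dV (\<lambda>t. fst (z t)) (\<lambda>t. snd (z t))"
  unfolding sol_def
proof
  fix t
  obtain DH where DH: "((\<lambda>z::real\<times>real. (snd z)^2/2 + V (fst z)) has_derivative DH) (at (z t))"
    "(z has_vector_derivative (DH (0, 1), - DH (1, 0))) (at t)"
    using h unfolding ham_solution_def by blast
  have "DH = (\<lambda>w. snd (z t) * snd w + dV (fst (z t)) * fst w)"
    by (rule has_derivative_unique[OF DH(1) H_deriv[OF dV]])
  then have zd: "(z has_vector_derivative (snd (z t), - dV (fst (z t)))) (at t)" using DH(2) by simp
  then have zd': "(z has_derivative (\<lambda>x. x *\<^sub>R (snd (z t), - dV (fst (z t))))) (at t)"
    unfolding has_vector_derivative_def .
  have 1: "((\<lambda>t. fst (z t)) has_derivative (\<lambda>x. x * snd (z t))) (at t)"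
    using has_derivative_fst[OF zd'] by simp
  have 2: "((\<lambda>t. snd (z t)) has_derivative (\<lambda>x. x * - dV (fst (z t)))) (at t)"
    using has_derivative_snd[OF zd'] by (simp del: mult_minus_right)
  show "((\<lambda>t. fst (z t)) has_real_derivative snd (z t)) (at t) \<and>
        ((\<lambda>t. snd (z t)) has_real_derivative - dV (fst (z t))) (at t)"
  proof
    have e1: "(\<lambda>x. x * snd (z t)) = (*) (snd (z t))" by (auto simp: fun_eq_iff)
    have e2: "(\<lambda>x. x * - dV (fst (z t))) = (*) (- dV (fst (z t)))" by (auto simp: fun_eq_iff)
    show "((\<lambda>t. fst (z t)) has_real_derivative snd (z t)) (at t)"
      using 1 unfolding has_field_derivative_def e1 .
    show "((\<lambda>t. snd (z t)) has_real_derivative - dV (fst (z t))) (at t)"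
      using 2 unfolding has_field_derivative_def e2 .
  qed
qed

lemma reg_from:
  assumes r: "regular_value (\<lambda>z::real\<times>real. (snd z)^2/2 + V (fst z)) E"
    and dV: "\<And>x. (V has_real_derivative dV x) (at x)"
    and VE: "V x = E"
  shows "dV x \<noteq> 0"
proof
  assume 0: "dV x = 0"
  have "(\<lambda>z::real\<times>real. (snd z)^2/2 + V (fst z)) (x, 0) = E" using VE by simp
  then have "\<not> ((\<lambda>z::real\<times>real. (snd z)^2/2 + V (fst z)) has_derivative (\<lambda>v. 0)) (at (x, 0))"
    using r unfolding regular_value_def by blast
  moreover have "((\<lambda>z::real\<times>real. (snd z)^2/2 + V (fst z)) has_derivative (\<lambda>v. 0)) (at (x, 0))"
    using H_deriv[OF dV, of "(x, 0)"] 0 by simp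
  ultimately show False by blast
qed


definition Vl :: "real \<Rightarrow> real \<Rightarrow> real \<Rightarrow> real \<Rightarrow> real \<Rightarrow> real" where "Vl d m1 m2 h x = - d * (m1 + m2) * cosh x - h * d\<^sup>2 * (cosh x)\<^sup>2"
definition dVl :: "real \<Rightarrow> real \<Rightarrow> real \<Rightarrow> real \<Rightarrow> real \<Rightarrow> real" where "dVl d m1 m2 h x = - d * (m1 + m2) * sinh x - h * d\<^sup>2 * (2 * cosh x * sinh x)"
definition ddVl :: "real \<Rightarrow> real \<Rightarrow> real \<Rightarrow> real \<Rightarrow> real \<Rightarrow> real" where "ddVl d m1 m2 h x = - d * (m1 + m2) * cosh x - h * d\<^sup>2 * (2 * (sinh x * sinh x + cosh x * cosh x))"
definition Vn :: "real \<Rightarrow> real \<Rightarrow> real \<Rightarrow> real \<Rightarrow> real \<Rightarrow> real" where "Vn d m1 m2 h x = d * (m1 - m2) * sin x + h * d\<^sup>2 * (sin x)\<^sup>2"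
definition dVn :: "real \<Rightarrow> real \<Rightarrow> real \<Rightarrow> real \<Rightarrow> real \<Rightarrow> real" where "dVn d m1 m2 h x = d * (m1 - m2) * cos x + h * d\<^sup>2 * (2 * sin x * cos x)"
definition ddVn :: "real \<Rightarrow> real \<Rightarrow> real \<Rightarrow> real \<Rightarrow> real \<Rightarrow> real" where "ddVn d m1 m2 h x = - d * (m1 - m2) * sin x + h * d\<^sup>2 * (2 * (cos x * cos x - sin x * sin x))"

lemma Vl_d: "(Vl d m1 m2 h has_real_derivative dVl d m1 m2 h x) (at x)"
  unfolding Vl_def[abs_def] dVl_def by (auto intro!: derivative_eq_intros simp: algebra_simps)
lemma dVl_d: "(dVl d m1 m2 h has_real_derivative ddVl d m1 m2 h x) (at x)"
  unfolding dVl_def[abs_def] ddVl_def by (auto intro!: derivative_eq_intros simp: algebra_simps)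
lemma ddVl_c: "isCont (ddVl d m1 m2 h) x"
  unfolding ddVl_def[abs_def] by (auto intro!: continuous_intros isCont_cosh isCont_sinh)
lemma dVl_c: "isCont (dVl d m1 m2 h) x" by (rule DERIV_isCont[OF dVl_d])
lemma Vn_d: "(Vn d m1 m2 h has_real_derivative dVn d m1 m2 h x) (at x)"
  unfolding Vn_def[abs_def] dVn_def by (auto intro!: derivative_eq_intros simp: algebra_simps)
lemma dVn_d: "(dVn d m1 m2 h has_real_derivative ddVn d m1 m2 h x) (at x)"
  unfolding dVn_def[abs_def] ddVn_def by (auto intro!: derivative_eq_intros simp: algebra_simps)
lemma ddVn_c: "isCont (ddVn d m1 m2 h) x"
  unfolding ddVn_def[abs_def] by (auto intro!: continuous_intros isCont_cos isCont_sin)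
lemma dVn_c: "isCont (dVn d m1 m2 h) x" by (rule DERIV_isCont[OF dVn_d])

lemma Hlam_eq: "Hlam d m1 m2 h = (\<lambda>z. (snd z)^2/2 + Vl d m1 m2 h (fst z))"
  unfolding Hlam_def[abs_def] Vl_def by (auto simp: fun_eq_iff)
lemma Hnu_eq: "Hnu d m1 m2 h = (\<lambda>z. (snd z)^2/2 + Vn d m1 m2 h (fst z))"
  unfolding Hnu_def[abs_def] Vn_def by (auto simp: fun_eq_iff)

theorem corollary4:
  fixes d m1 m2 h g :: real
    and TT :: "((real \<times> real) \<times> (real \<times> real \<times> real)) set"
    and zl zn :: "real \<Rightarrow> real \<times> real"
  assumes "d > 0" and "m1 > 0" and "m2 > 0" and "h < 0"
    and "regular_torus d m1 m2 h g TT"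
    and "ham_solution (Hlam d m1 m2 h) zl"
    and "ham_solution (Hnu d m1 m2 h) zn"
    and "\<forall>\<tau>. (zl \<tau>, cyl (zn \<tau>)) \<in> TT"
    and "\<exists>!\<tau>. collision (zl \<tau>) (zn \<tau>)"
  shows "period (cyl \<circ> zn) / period zl \<notin> \<rat>"
proof
  assume rat: "period (cyl \<circ> zn) / period zl \<in> \<rat>"
  note rt = assms(5)[unfolded regular_torus_def]
  have regl: "regular_value (\<lambda>z. (snd z)^2/2 + Vl d m1 m2 h (fst z)) (- g)"
    using rt Hlam_eq by metis
  have regn: "regular_value (\<lambda>z. (snd z)^2/2 + Vn d m1 m2 h (fst z)) g"
    using rt Hnu_eq by metis
  have sub: "TT \<subseteq> level_set d m1 m2 h g"
    using rt connected_component_subset by metis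
  have cpt: "compact TT" using rt by blast
  define ql where "ql t = fst (zl t)" for t
  define pl where "pl t = snd (zl t)" for t
  define qn where "qn t = fst (zn t)" for t
  define pn where "pn t = snd (zn t)" for t
  have sl: "sol (dVl d m1 m2 h) ql pl"
    unfolding ql_def[abs_def] pl_def[abs_def]
    by (rule ham_to_sol[OF _ Vl_d]) (use assms(6) Hlam_eq in metis)
  have sn: "sol (dVn d m1 m2 h) qn pn"
    unfolding qn_def[abs_def] pn_def[abs_def]
    by (rule ham_to_sol[OF _ Vn_d]) (use assms(7) Hnu_eq in metis)
  have inL: "(zl t, cyl (zn t)) \<in> level_set d m1 m2 h g" for t using assms(8) sub by blast
  have enl: "(pl t)^2/2 + Vl d m1 m2 h (ql t) = - g" for t
    using inL[of t] unfolding level_set_def Hlam_eq ql_def pl_def by auto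
  have enn: "(pn t)^2/2 + Vn d m1 m2 h (qn t) = g" for t
  proof -
    obtain w where w: "Hnu d m1 m2 h w = g" "cyl (zn t) = cyl w"
      using inL[of t] unfolding level_set_def by auto
    have "sin (qn t) = sin (fst w)" "pn t = snd w" using w(2) unfolding cyl_def qn_def pn_def by auto
    then show ?thesis using w(1) unfolding Hnu_eq Vn_def by simp
  qed
  have rgl: "dVl d m1 m2 h x \<noteq> 0" if "Vl d m1 m2 h x = - g" for x
    by (rule reg_from[OF regl Vl_d that])
  have rgn: "dVn d m1 m2 h x \<noteq> 0" if "Vn d m1 m2 h x = g" for x
    by (rule reg_from[OF regn Vn_d that])
  obtain R where R: "\<forall>x\<in>TT. norm x \<le> R" using compact_imp_bounded[OF cpt] bounded_iff by metis
  have bdl: "\<bar>ql t\<bar> \<le> R" for t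
  proof -
    have "\<bar>ql t\<bar> = norm (fst (zl t))" unfolding ql_def by simp
    also have "\<dots> \<le> norm (zl t)" by (metis norm_fst_le prod.collapse)
    also have "\<dots> \<le> norm (zl t, cyl (zn t))" by (rule norm_fst_le)
    also have "\<dots> \<le> R" using R assms(8) by blast
    finally show ?thesis .
  qed
  have lipl: "loclip (dVl d m1 m2 h)" by (rule loclip_C1[OF dVl_d ddVl_c])
  have lipn: "loclip (dVn d m1 m2 h)" by (rule loclip_C1[OF dVn_d ddVn_c])
  obtain Tl where Tl: "Tl > 0" "\<forall>t. ql (t + Tl) = ql t \<and> pl (t + Tl) = pl t"
    using bounded_periodic[OF Vl_d dVl_c lipl sl enl rgl bdl] by blast
  have perV: "Vn d m1 m2 h (x + 2 * pi) = Vn d m1 m2 h x" for x unfolding Vn_def by simp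
  have perdV: "dVn d m1 m2 h (x + 2 * pi) = dVn d m1 m2 h x" for x unfolding dVn_def by simp
  obtain Tn where Tn: "Tn > 0"
    "\<forall>t. cos (qn (t + Tn)) = cos (qn t) \<and> sin (qn (t + Tn)) = sin (qn t) \<and> pn (t + Tn) = pn t"
    using rotation_periodic[OF Vn_d dVn_c lipn sn enn rgn perV perdV] by blast
  have zl_eq: "zl = (\<lambda>t. (ql t, pl t))" unfolding ql_def pl_def by simp
  have cz_eq: "cyl \<circ> zn = (\<lambda>t. (cos (qn t), sin (qn t), pn t))"
    unfolding qn_def pn_def cyl_def by (auto simp: fun_eq_iff)
  have dql: "\<And>t. (ql has_real_derivative pl t) (at t)" and dpl: "\<And>t. (pl has_real_derivative - dVl d m1 m2 h (ql t)) (at t)"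
    using sl unfolding sol_def by auto
  have dqn: "\<And>t. (qn has_real_derivative pn t) (at t)" and dpn: "\<And>t. (pn has_real_derivative - dVn d m1 m2 h (qn t)) (at t)"
    using sn unfolding sol_def by auto
  have Pl: "period zl > 0 \<and> (\<forall>t. zl (t + period zl) = zl t)"
  proof -
    have c: "\<And>t. isCont zl t" unfolding zl_eq using sol_cont[OF sl] by (auto intro!: continuous_intros)
    have per: "\<And>t. zl (t + Tl) = zl t" unfolding zl_eq using Tl(2) by auto
    show ?thesis
    proof (cases "pl 0 = 0")
      case True
      have "Vl d m1 m2 h (ql 0) = - g" using enl[of 0] True by simp
      then have D: "- dVl d m1 m2 h (ql 0) \<noteq> 0" using rgl by simp
      have "((\<lambda>t. snd (zl t)) has_real_derivative - dVl d m1 m2 h (ql 0)) (at 0)"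
        using dpl[of 0] unfolding pl_def[abs_def] .
      from period_attained[OF c Tl(1) per this D] show ?thesis .
    next
      case False
      have "((\<lambda>t. fst (zl t)) has_real_derivative pl 0) (at 0)"
        using dql[of 0] unfolding ql_def[abs_def] .
      from period_attained[OF c Tl(1) per this False] show ?thesis .
    qed
  qed
  have Pn: "period (cyl \<circ> zn) > 0 \<and> (\<forall>t. (cyl \<circ> zn) (t + period (cyl \<circ> zn)) = (cyl \<circ> zn) t)"
  proof -
    have cont: "\<And>t. isCont (cyl \<circ> zn) t"
      unfolding cz_eq using sol_cont[OF sn] by (auto intro!: continuous_intros isCont_o2[of qn _ cos] isCont_o2[of qn _ sin])
    have per: "\<And>t. (cyl \<circ> zn) (t + Tn) = (cyl \<circ> zn) t" unfolding cz_eq using Tn by auto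
    show ?thesis
    proof (cases "pn 0 = 0")
      case True
      have "Vn d m1 m2 h (qn 0) = g" using enn[of 0] True by simp
      then have D: "- dVn d m1 m2 h (qn 0) \<noteq> 0" using rgn by simp
      have "((\<lambda>t. snd (snd ((cyl \<circ> zn) t))) has_real_derivative - dVn d m1 m2 h (qn 0)) (at 0)"
        unfolding cz_eq using dpn[of 0] by simp
      from period_attained[OF cont Tn(1) per this D] show ?thesis .
    next
      case False
      show ?thesis
      proof (cases "sin (qn 0) = 0")
        case True
        then have "cos (qn 0) \<noteq> 0" using sin_cos_squared_add[of "qn 0"] by auto
        then have D: "cos (qn 0) * pn 0 \<noteq> 0" using False by simp
        have "((\<lambda>t. fst (snd ((cyl \<circ> zn) t))) has_real_derivative cos (qn 0) * pn 0) (at 0)"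
          unfolding cz_eq by (auto intro!: derivative_eq_intros dqn)
        from period_attained[OF cont Tn(1) per this D] show ?thesis .
      next
        case False2: False
        then have D: "- sin (qn 0) * pn 0 \<noteq> 0" using False by simp
        have "((\<lambda>t. fst ((cyl \<circ> zn) t)) has_real_derivative - sin (qn 0) * pn 0) (at 0)"
          unfolding cz_eq by (auto intro!: derivative_eq_intros dqn)
        from period_attained[OF cont Tn(1) per this D] show ?thesis .
      qed
    qed
  qed
  define A where "A = period zl"
  define B where "B = period (cyl \<circ> zn)"
  have A: "A > 0" "\<forall>t. zl (t + A) = zl t" using Pl unfolding A_def by auto
  have B: "B > 0" "\<forall>t. (cyl \<circ> zn) (t + B) = (cyl \<circ> zn) t" using Pn unfolding B_def by auto
  obtain a b :: int where ab: "b > 0" "B / A = of_int a / of_int b"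
    using Rats_cases'[OF rat[folded A_def B_def]] by metis
  have "of_int a / of_int b > (0::real)" using ab A B by (metis divide_pos_pos)
  then have a0: "a > 0" using ab(1) by (simp add: zero_less_divide_iff)
  define P where "P = of_int b * B"
  have P0: "P > 0" unfolding P_def using ab B by simp
  have PA: "P = of_nat (nat a) * A" unfolding P_def using ab A a0
    by (simp add: field_simps)
  have PB: "P = of_nat (nat b) * B" unfolding P_def using ab by simp
  obtain t0 where t0: "collision (zl t0) (zn t0)" using assms(9) by blast
  have zl1: "zl (t0 + P) = zl t0" unfolding PA by (rule per_iter[OF A(2)])
  have zn1: "(cyl \<circ> zn) (t0 + P) = (cyl \<circ> zn) t0" unfolding PB by (rule per_iter[OF B(2)])
  then have "cos (fst (zn (t0 + P))) = cos (fst (zn t0))" unfolding cyl_def by simp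
  moreover have "cos (fst (zn t0)) = 0"
    using t0 unfolding collision_def cos_zero_iff_int2 by (auto simp: algebra_simps)
  ultimately have "cos (fst (zn (t0 + P))) = 0" by simp
  then have "collision (zl (t0 + P)) (zn (t0 + P))"
    using t0 zl1 unfolding collision_def cos_zero_iff_int2 by (auto simp: algebra_simps)
  then have "t0 + P = t0" using t0 assms(9) by blast
  then show False using P0 by simp
qed

end
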